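(* Let $n\ge5$ be any integer, $r\in\mathbb Z_n$, $\mathsf V=\mathsf V(3,r)$ and $k\ge2$. Then for all $1\le i\le k-1$, on $\mathsf V^{\otimes k}$, $$(\check{\mathsf R}_i-q^{-r^2-2r}\mathrm{id})(\check{\mathsf R}_i+q^{-r^2-2r-2}\mathrm{id})(\check{\mathsf R}_i-q^{-r^2-2r-3}\mathrm{id})=0.$$
   Context: $\mathbb k$ algebraically closed of characteristic zero, $n\ge2$, $q\in\mathbb k$ a primitive $n$th root of unity. $\mathsf D_n$ is the Hopf algebra generated by $a,b,c,d$ with relations $ba=qab$, $db=qbd$, $bc=cb$, $ca=qac$, $dc=qcd$, $da-qad=1-bc$, $a^n=d^n=0$, $b^n=c^n=1$ and $\Delta(a)=a\otimes b+1\otimes a$, $\Delta(d)=d\otimes c+1\otimes d$, $\Delta(b)=b\otimes b$, $\Delta(c)=c\otimes c$. For $1\le\ell\le n$, $s\in\mathbb Z_n$, $\mathsf V(\ell,s)$ is the module with basis $v_1,\dots,v_\ell$ and action $a.v_j=v_{j+1}$ ($j<\ell$), $a.v_\ell=0$, $b.v_j=q^{s+j-1}v_j$, $c.v_j=q^{j-(s+\ell)}v_j$, $d.v_1=0$, $d.v_j=\alpha_{j-1}(\ell)v_{j-1}$ ($j>1$), $\alpha_i(\ell)=\frac{(q^i-1)(1-q^{i-\ell})}{q-1}$. With $[m]=1+q+\dots+q^{m-1}$, $[m]!=[m]\cdots[1]$, $[0]!=1$, the R-matrix is $\mathcal R=\frac1n\sum_{m,s,t=0}^{n-1}\frac{q^{-tm}}{[s]!}a^sb^t\otimes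 c^md^s$. $\mathsf R$ is the action of $\mathcal R$ on $\mathsf V\otimes\mathsf V$ ($a^sb^t$ on the first factor), $\sigma$ the flip, $\check{\mathsf R}=\sigma\mathsf R$, and $\check{\mathsf R}_i=\mathrm{id}^{\otimes(i-1)}\otimes\check{\mathsf R}\otimes\mathrm{id}^{\otimes(k-i-1)}$ on $\mathsf V^{\otimes k}$. *)

theory Defs
  imports "HOL-Computational_Algebra.Polynomial"
begin

definition alg_closed_field :: "'a::field itself \<Rightarrow> bool" where
  "alg_closed_field _ \<longleftrightarrow> (\<forall>p::'a poly. degree p \<ge> 1 \<longrightarrow> (\<exists>x. poly p x = 0))"

definition primitive_root :: "nat \<Rightarrow> 'a::field \<Rightarrow> bool" where
  "primitive_root n q \<longleftrightarrow> q ^ n = 1 \<and> (\<forall>m. 0 < m \<and> m < n \<longrightarrow> q ^ m \<noteq> 1)"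

text \<open>Linear maps as matrices M y x (coefficient of basis vector y in the image of basis vector x)
  over a finite index set S of basis vectors.\<close>
definition mmul :: "'i set \<Rightarrow> ('i \<Rightarrow> 'i \<Rightarrow> 'a::comm_ring_1) \<Rightarrow> ('i \<Rightarrow> 'i \<Rightarrow> 'a) \<Rightarrow> 'i \<Rightarrow> 'i \<Rightarrow> 'a" where
  "mmul S M N y x = (\<Sum>z\<in>S. M y z * N z x)"

definition mid :: "'i \<Rightarrow> 'i \<Rightarrow> 'a::comm_ring_1" where
  "mid y x = (if y = x then 1 else 0)"

fun mpow :: "'i set \<Rightarrow> ('i \<Rightarrow> 'i \<Rightarrow> 'a::comm_ring_1) \<Rightarrow> nat \<Rightarrow> 'i \<Rightarrow> 'i \<Rightarrow> 'a" where
  "mpow S M 0 = mid"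
| "mpow S M (Suc m) = mmul S M (mpow S M m)"

definition qint :: "'a::field \<Rightarrow> nat \<Rightarrow> 'a" where
  "qint q m = (\<Sum>i<m. q ^ i)"

definition qfact :: "'a::field \<Rightarrow> nat \<Rightarrow> 'a" where
  "qfact q m = (\<Prod>i\<in>{1..m}. qint q i)"

definition alpha :: "'a::field \<Rightarrow> nat \<Rightarrow> nat \<Rightarrow> 'a" where
  "alpha q l i = (q ^ i - 1) * (1 - q powi (int i - int l)) / (q - 1)"

text \<open>The module V(l,s) with basis v_1..v_l (indices 1..l); actions of a,b,c,d.\<close>
definition Vbasis :: "nat \<Rightarrow> nat set" where
  "Vbasis l = {1..l}"

definition actA :: "nat \<Rightarrow> nat \<Rightarrow> nat \<Rightarrow> 'a::field" where
  "actA l y x = (if x < l \<and> y = x + 1 then 1 else 0)"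

definition actB :: "'a::field \<Rightarrow> int \<Rightarrow> nat \<Rightarrow> nat \<Rightarrow> 'a" where
  "actB q s y x = (if y = x then q powi (s + int x - 1) else 0)"

definition actC :: "'a::field \<Rightarrow> nat \<Rightarrow> int \<Rightarrow> nat \<Rightarrow> nat \<Rightarrow> 'a" where
  "actC q l s y x = (if y = x then q powi (int x - (s + int l)) else 0)"

definition actD :: "'a::field \<Rightarrow> nat \<Rightarrow> nat \<Rightarrow> nat \<Rightarrow> 'a" where
  "actD q l y x = (if x > 1 \<and> y = x - 1 then alpha q l (x - 1) else 0)"

definition Rmat :: "nat \<Rightarrow> 'a::field \<Rightarrow> nat \<Rightarrow> int \<Rightarrow> nat \<times> nat \<Rightarrow> nat \<times> nat \<Rightarrow> 'a" where
  "Rmat n q l s y x =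
     (1 / of_nat n) * (\<Sum>m<n. \<Sum>e<n. \<Sum>t<n.
        (q powi (- (int t * int m)) / qfact q e)
        * mmul (Vbasis l) (mpow (Vbasis l) (actA l) e) (mpow (Vbasis l) (actB q s) t) (fst y) (fst x)
        * mmul (Vbasis l) (mpow (Vbasis l) (actC q l s) m) (mpow (Vbasis l) (actD q l) e) (snd y) (snd x))"

definition Rcheck :: "nat \<Rightarrow> 'a::field \<Rightarrow> nat \<Rightarrow> int \<Rightarrow> nat \<times> nat \<Rightarrow> nat \<times> nat \<Rightarrow> 'a" where
  "Rcheck n q l s y x = Rmat n q l s (snd y, fst y) x"

text \<open>Basis of V^{(x)k}: words of length k over {1..l}.\<close>
definition Words :: "nat \<Rightarrow> nat \<Rightarrow> nat list set" where
  "Words l k = {w. length w = k \<and> set w \<subseteq> Vbasis l}"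

text \<open>Rcheck_i acting on tensor factors i and i+1 (1-based), i.e. list positions i-1 and i.\<close>
definition Rcheck_i :: "nat \<Rightarrow> 'a::field \<Rightarrow> nat \<Rightarrow> int \<Rightarrow> nat \<Rightarrow> nat list \<Rightarrow> nat list \<Rightarrow> 'a" where
  "Rcheck_i n q l s i y x =
     (if (\<forall>p < length x. p \<noteq> i - 1 \<and> p \<noteq> i \<longrightarrow> y ! p = x ! p)
      then Rcheck n q l s (y ! (i - 1), y ! i) (x ! (i - 1), x ! i) else 0)"

end

theory Submission imports Defs begin

lemma fin_Vbasis: "finite (Vbasis l)" by (simp add: Vbasis_def)

lemma mpowA: "x \<in> Vbasis l \<Longrightarrow> mpow (Vbasis l) (actA l) e y x = (if y = x+e \<and> y \<le> l then 1 else 0)"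
proof (induction e arbitrary: y)
  case 0 then show ?case by (auto simp: mid_def Vbasis_def)
next
  case (Suc e)
  have "mpow (Vbasis l) (actA l) (Suc e) y x = (\<Sum>z\<in>Vbasis l. (if z = x + e then (if z < l \<and> y = z + 1 then 1::'a else 0) else 0))"
    by (simp add: mmul_def Suc.IH[OF Suc.prems]) (auto simp: actA_def intro!: sum.cong)
  also have "\<dots> = (if y = x+Suc e \<and> y \<le> l then 1 else 0)"
    using Suc.prems by (auto simp: Vbasis_def)
  finally show ?case .
qed

lemma mpowB: "x \<in> Vbasis l \<Longrightarrow> mpow (Vbasis l) (actB q s) t y x = (if y = x then (q powi (s + int x - 1))^t else 0)"
proof (induction t arbitrary: y)
  case 0 then show ?case by (auto simp: mid_def Vbasis_def)
next
  case (Suc t)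
  have "mpow (Vbasis l) (actB q s) (Suc t) y x = (\<Sum>z\<in>Vbasis l. (if z = x then (if y = z then (q::'a::field) powi (s + int z - 1) * (q powi (s + int x - 1))^t else 0) else 0))"
    by (simp add: mmul_def Suc.IH[OF Suc.prems]) (auto simp: actB_def intro!: sum.cong)
  also have "\<dots> = (if y = x then (q powi (s + int x - 1))^Suc t else 0)"
    using Suc.prems by (auto simp: Vbasis_def)
  finally show ?case .
qed

lemma mpowC: "x \<in> Vbasis l \<Longrightarrow> mpow (Vbasis l) (actC q l s) t y x = (if y = x then (q powi (int x - (s + int l)))^t else 0)"
proof (induction t arbitrary: y)
  case 0 then show ?case by (auto simp: mid_def Vbasis_def)
next
  case (Suc t)
  have "mpow (Vbasis l) (actC q l s) (Suc t) y x = (\<Sum>z\<in>Vbasis l. (if z = x then (if y = z then (q::'a::field) powi (int z - (s + int l)) * (q powi (int x - (s + int l)))^t else 0) else 0))"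
    by (simp add: mmul_def Suc.IH[OF Suc.prems]) (auto simp: actC_def intro!: sum.cong)
  also have "\<dots> = (if y = x then (q powi (int x - (s + int l)))^Suc t else 0)"
    using Suc.prems by (auto simp: Vbasis_def)
  finally show ?case .
qed

lemma mpowD: "x \<in> Vbasis l \<Longrightarrow> mpow (Vbasis l) (actD q l) e y x = (if 1 \<le> y \<and> y + e = x then (\<Prod>j<e. alpha q l (x - 1 - j)) else 0)"
proof (induction e arbitrary: y)
  case 0 then show ?case by (auto simp: mid_def Vbasis_def)
next
  case (Suc e)
  have "mpow (Vbasis l) (actD q l) (Suc e) y x = (\<Sum>z\<in>Vbasis l. (if z + e = x then (if 1 < z \<and> y = z - 1 then alpha (q::'a::field) l (z - 1) * (\<Prod>j<e. alpha q l (x - 1 - j)) else 0) else 0))"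
    by (simp add: mmul_def Suc.IH[OF Suc.prems]) (auto simp: actD_def Vbasis_def intro!: sum.cong)
  also have "\<dots> = (if 1 \<le> y \<and> y + Suc e = x then (\<Prod>j<Suc e. alpha q l (x - 1 - j)) else 0)"
  proof (cases "e < x")
    case True
    have "(\<Sum>z\<in>Vbasis l. (if z + e = x then (if 1 < z \<and> y = z - 1 then alpha q l (z - 1) * (\<Prod>j<e. alpha q l (x - 1 - j)) else 0) else 0))
       = (\<Sum>z\<in>Vbasis l. (if z = x - e then (if 1 < z \<and> y = z - 1 then alpha q l (z - 1) * (\<Prod>j<e. alpha q l (x - 1 - j)) else 0) else 0))"
      using True by (intro sum.cong) auto
    also have "\<dots> = (if 1 < x - e \<and> y = x - e - 1 then alpha q l (x - e - 1) * (\<Prod>j<e. alpha q l (x - 1 - j)) else 0)"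
      using True Suc.prems by (auto simp: Vbasis_def)
    also have "\<dots> = (if 1 \<le> y \<and> y + Suc e = x then (\<Prod>j<Suc e. alpha q l (x - 1 - j)) else 0)"
      using True by (auto simp: prod.lessThan_Suc mult.commute)
    finally show ?thesis .
  next
    case False
    then show ?thesis by (auto intro!: sum.neutral)
  qed
  finally show ?case .
qed

lemma powi_pow: "(x powi a)^t = (x::'a::field) powi (a * int t)"
  by (simp add: power_int_mult)

lemma prim_nz: "primitive_root n (q::'a::field) \<Longrightarrow> 0 < n \<Longrightarrow> q \<noteq> 0"
  unfolding primitive_root_def by (cases n) auto

lemma powi_period:
  assumes "primitive_root n (q::'a::field)" "0 < n"
  shows "q powi (j + int n * k) = q powi j"
proof -
  have q0: "q \<noteq> 0" using prim_nz assms by blast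
  have "q powi (int n * k) = (q powi int n) powi k" by (simp add: power_int_mult)
  also have "\<dots> = 1" using assms by (simp add: primitive_root_def)
  finally show ?thesis using q0 by (simp add: power_int_add)
qed

lemma powi_mod:
  assumes "primitive_root n (q::'a::field)" "0 < n"
  shows "q powi j = q ^ nat (j mod int n)"
proof -
  have "j = j mod int n + int n * (j div int n)" by simp
  hence "q powi j = q powi (j mod int n + int n * (j div int n))" by simp
  also have "\<dots> = q powi (j mod int n)" by (rule powi_period[OF assms])
  also have "\<dots> = q ^ nat (j mod int n)" using assms(2) by (simp add: power_int_def)
  finally show ?thesis .
qed

lemma powi_eq_1:
  assumes "primitive_root n (q::'a::field)" "0 < n"
  shows "q powi j = 1 \<longleftrightarrow> int n dvd j"
proof -
  have "q powi j = 1 \<longleftrightarrow> q ^ nat (j mod int n) = 1" using powi_mod[OF assms] by simp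
  also have "\<dots> \<longleftrightarrow> nat (j mod int n) = 0"
  proof
    assume h: "q ^ nat (j mod int n) = 1"
    show "nat (j mod int n) = 0"
    proof (rule ccontr)
      assume "nat (j mod int n) \<noteq> 0"
      moreover have "nat (j mod int n) < n" using assms(2) by (simp add: nat_less_iff)
      ultimately show False using h assms(1) unfolding primitive_root_def by auto
    qed
  qed simp
  also have "\<dots> \<longleftrightarrow> j mod int n = 0"
  proof -
    have "0 \<le> j mod int n" using assms(2) by simp
    then show ?thesis by linarith
  qed
  also have "\<dots> \<longleftrightarrow> int n dvd j" by (simp add: dvd_eq_mod_eq_0)
  finally show ?thesis .
qed

lemma geom_root:
  assumes "primitive_root n (q::'a::field)" "0 < n"
  shows "(\<Sum>t<n. (q powi j)^t) = (if int n dvd j then of_nat n else 0)"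
proof (cases "int n dvd j")
  case True
  then show ?thesis using powi_eq_1[OF assms, of j] by simp
next
  case False
  hence ne: "q powi j \<noteq> 1" using powi_eq_1[OF assms] by simp
  have q0: "q \<noteq> 0" using prim_nz assms by blast
  have "(q powi j)^n = q powi (int n * j)" by (simp add: powi_pow mult.commute)
  also have "\<dots> = (q ^ n) powi j" by (simp add: power_int_mult)
  also have "\<dots> = 1" using assms by (simp add: primitive_root_def)
  finally have "(q powi j)^n = 1" .
  then show ?thesis using False ne by (simp add: geometric_sum)
qed

lemma orth:
  assumes "primitive_root n (q::'a::field_char_0)" "0 < n"
  shows "(1 / of_nat n) * (\<Sum>m<n. \<Sum>t<n. q powi (- (int t * int m)) * (q powi A)^t * (q powi B)^m) = q powi (A * B)"
proof -
  have q0: "q \<noteq> 0" using prim_nz assms by blast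
  have e1: "q powi (- (int t * int m)) * (q powi A)^t = (q powi (A - int m))^t" for m t
  proof -
    have "q powi (- (int t * int m)) * (q powi A)^t = q powi (- (int t * int m)) * q powi (A * int t)"
      by (simp only: powi_pow)
    also have "\<dots> = q powi (- (int t * int m) + A * int t)"
      using power_int_add[of q "- (int t * int m)" "A * int t"] q0 by simp
    also have "- (int t * int m) + A * int t = (A - int m) * int t" by (simp add: algebra_simps)
    also have "q powi ((A - int m) * int t) = (q powi (A - int m))^t" by (simp only: powi_pow)
    finally show ?thesis .
  qed
  define m0 where "m0 = nat (A mod int n)"
  have m0n: "m0 < n"
  proof -
    have "0 \<le> A mod int n" "A mod int n < int n" using assms(2) by simp_all
    then show ?thesis unfolding m0_def by (simp add: nat_less_iff)
  qed
  have dv: "int n dvd (A - int m) \<longleftrightarrow> m = m0" if "m < n" for m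
  proof -
    have "int n dvd (A - int m) \<longleftrightarrow> A mod int n = int m mod int n"
      by (simp add: mod_eq_dvd_iff)
    also have "int m mod int n = int m" using that by simp
    finally show ?thesis using assms(2) by (auto simp: m0_def)
  qed
  have "(\<Sum>m<n. \<Sum>t<n. q powi (- (int t * int m)) * (q powi A)^t * (q powi B)^m)
      = (\<Sum>m<n. (q powi B)^m * (\<Sum>t<n. (q powi (A - int m))^t))"
  proof (intro sum.cong refl)
      fix m assume "m \<in> {..<n}"
      have "(\<Sum>t<n. q powi (- (int t * int m)) * (q powi A)^t * (q powi B)^m) = (\<Sum>t<n. (q powi B)^m * (q powi (A - int m))^t)"
        by (intro sum.cong refl) (simp only: e1[symmetric] ac_simps)
      then show "(\<Sum>t<n. q powi (- (int t * int m)) * (q powi A)^t * (q powi B)^m) = (q powi B)^m * (\<Sum>t<n. (q powi (A - int m))^t)"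
        by (simp only: sum_distrib_left)
  qed
  also have "\<dots> = (\<Sum>m<n. if m = m0 then of_nat n * (q powi B)^m else 0)"
    by (intro sum.cong refl) (auto simp: geom_root[OF assms] dv)
  also have "\<dots> = of_nat n * (q powi B)^m0" using m0n by simp
  finally have S: "(\<Sum>m<n. \<Sum>t<n. q powi (- (int t * int m)) * (q powi A)^t * (q powi B)^m) = of_nat n * (q powi B)^m0" .
  have "(q powi B)^m0 = q powi (B * (A mod int n))"
    using assms(2) by (simp only: powi_pow m0_def) simp
  also have "\<dots> = q powi (B * (A mod int n) + int n * (B * (A div int n)))"
    by (rule powi_period[OF assms, symmetric])
  also have "B * (A mod int n) + int n * (B * (A div int n)) = A * B"
  proof -
    have "A * B = (A mod int n + int n * (A div int n)) * B" by simp
    also have "\<dots> = B * (A mod int n) + int n * (B * (A div int n))" by (simp only: algebra_simps)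
    finally show ?thesis by simp
  qed
  finally show ?thesis using S assms(2) by simp
qed

lemma Rmat_formula:
  fixes q :: "'a::field_char_0"
  assumes pr: "primitive_root n q" and ln: "l \<le> n" and l1: "1 \<le> l"
    and y1: "y1 \<in> Vbasis l" and y2: "y2 \<in> Vbasis l" and x1: "x1 \<in> Vbasis l" and x2: "x2 \<in> Vbasis l"
  shows "Rmat n q l s (y1, y2) (x1, x2) =
    (if x1 \<le> y1 \<and> y2 + (y1 - x1) = x2
     then (\<Prod>j<y1 - x1. alpha q l (x2 - 1 - j)) / qfact q (y1 - x1)
          * q powi ((s + int x1 - 1) * (int y2 - (s + int l)))
     else 0)"
proof -
  have n0: "0 < n" using ln l1 by simp
  have y1l: "y1 \<le> l" and y21: "1 \<le> y2" using y1 y2 by (auto simp: Vbasis_def)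
  define e0 where "e0 = y1 - x1"
  define K where "K = (\<Prod>j<e0. alpha q l (x2 - 1 - j)) / qfact q e0"
  define C where "C = (x1 \<le> y1 \<and> y2 + e0 = x2)"
  define be where "be = q powi (s + int x1 - 1)"
  define ga where "ga = q powi (int y2 - (s + int l))"
  have m1: "mmul (Vbasis l) (mpow (Vbasis l) (actA l) e) (mpow (Vbasis l) (actB q s) t) y1 x1
      = (if y1 = x1 + e then be^t else 0)" for e t
  proof -
    have "mmul (Vbasis l) (mpow (Vbasis l) (actA l) e) (mpow (Vbasis l) (actB q s) t) y1 x1
       = (\<Sum>z\<in>Vbasis l. if z = x1 then (if y1 = x1 + e then be^t else 0) else 0)"
      unfolding mmul_def using x1 y1
      using y1 by (intro sum.cong refl) (auto simp: mpowB[OF x1] mpowA[OF x1] be_def y1l)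
    also have "\<dots> = (if y1 = x1 + e then be^t else 0)" using x1 by (auto simp: sum.delta fin_Vbasis)
    finally show ?thesis .
  qed
  have m2: "mmul (Vbasis l) (mpow (Vbasis l) (actC q l s) m) (mpow (Vbasis l) (actD q l) e) y2 x2
      = ga^m * (if y2 + e = x2 then (\<Prod>j<e. alpha q l (x2 - 1 - j)) else 0)" for e m
  proof -
    have "mmul (Vbasis l) (mpow (Vbasis l) (actC q l s) m) (mpow (Vbasis l) (actD q l) e) y2 x2
       = (\<Sum>z\<in>Vbasis l. if z = y2 then ga^m * (if y2 + e = x2 then (\<Prod>j<e. alpha q l (x2 - 1 - j)) else 0) else 0)"
      unfolding mmul_def using x2 y2
      using y2 y21 by (intro sum.cong refl) (auto simp: mpowD[OF x2] mpowC ga_def)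
    also have "\<dots> = ga^m * (if y2 + e = x2 then (\<Prod>j<e. alpha q l (x2 - 1 - j)) else 0)" using y2 by (auto simp: sum.delta fin_Vbasis)
    finally show ?thesis .
  qed
  have e0n: "e0 < n" using y1 x1 ln by (auto simp: e0_def Vbasis_def)
  have T: "(q powi (- (int t * int m)) / qfact q e)
        * mmul (Vbasis l) (mpow (Vbasis l) (actA l) e) (mpow (Vbasis l) (actB q s) t) y1 x1
        * mmul (Vbasis l) (mpow (Vbasis l) (actC q l s) m) (mpow (Vbasis l) (actD q l) e) y2 x2
      = (if e = e0 \<and> C then K * (q powi (- (int t * int m)) * be^t * ga^m) else 0)" for e t m
    unfolding m1 m2 by (auto simp: e0_def C_def K_def)
  have "Rmat n q l s (y1, y2) (x1, x2) = (1 / of_nat n) * (\<Sum>m<n. \<Sum>e<n. \<Sum>t<n.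
          (if e = e0 \<and> C then K * (q powi (- (int t * int m)) * be^t * ga^m) else 0))"
    unfolding Rmat_def fst_conv snd_conv T ..
  also have "\<dots> = (1 / of_nat n) * (\<Sum>m<n. if C then K * (\<Sum>t<n. q powi (- (int t * int m)) * be^t * ga^m) else 0)"
  proof -
    have "(\<Sum>e<n. \<Sum>t<n. (if e = e0 \<and> C then K * (q powi (- (int t * int m)) * be^t * ga^m) else 0))
        = (if C then K * (\<Sum>t<n. q powi (- (int t * int m)) * be^t * ga^m) else 0)" for m
    proof -
      have "(\<Sum>e<n. \<Sum>t<n. (if e = e0 \<and> C then K * (q powi (- (int t * int m)) * be^t * ga^m) else 0))
         = (\<Sum>e<n. if e = e0 then (if C then K * (\<Sum>t<n. q powi (- (int t * int m)) * be^t * ga^m) else 0) else 0)"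
        by (intro sum.cong refl) (auto simp: sum_distrib_left)
      also have "\<dots> = (if C then K * (\<Sum>t<n. q powi (- (int t * int m)) * be^t * ga^m) else 0)"
        using e0n by (simp add: sum.delta)
      finally show ?thesis .
    qed
    then show ?thesis by simp
  qed
  also have "\<dots> = (if C then K * ((1 / of_nat n) * (\<Sum>m<n. \<Sum>t<n. q powi (- (int t * int m)) * be^t * ga^m)) else 0)"
    by (cases C) (simp_all only: if_True if_False sum_distrib_left[symmetric] mult_ac sum.neutral_const mult_zero_right mult_zero_left)
  also have "\<dots> = (if C then K * q powi ((s + int x1 - 1) * (int y2 - (s + int l))) else 0)"
    unfolding be_def ga_def orth[OF pr n0] ..
  finally show ?thesis by (simp only: C_def K_def e0_def)
qed


definition cf :: "'a::field \<Rightarrow> nat \<Rightarrow> nat \<Rightarrow> 'a" where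
  "cf q x2 e = (\<Prod>j<e. alpha q 3 (x2 - 1 - j)) / qfact q e"

lemma alpha31: "q \<noteq> 1 \<Longrightarrow> alpha q 3 (Suc 0) = 1 - inverse ((q::'a::field)^2)"
  unfolding alpha_def by (simp add: power_int_minus)
lemma alpha32: "q \<noteq> 1 \<Longrightarrow> alpha q 3 (Suc (Suc 0)) = (q + 1) * (1 - inverse (q::'a::field))"
proof -
  assume "q \<noteq> 1"
  hence "q - 1 \<noteq> 0" by simp
  have "q*q - 1 = (q+1)*(q-1)" by (simp add: algebra_simps)
  then show ?thesis unfolding alpha_def using \<open>q - 1 \<noteq> 0\<close> by (simp add: power_int_minus)
qed
lemma alpha32': "q \<noteq> 1 \<Longrightarrow> alpha q 3 2 = (q + 1) * (1 - inverse (q::'a::field))"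
  using alpha32 by (simp add: numeral_2_eq_2)
lemma alpha31': "q \<noteq> 1 \<Longrightarrow> alpha q 3 1 = 1 - inverse ((q::'a::field)^2)"
  using alpha31 by simp
lemma qfact1: "qfact q (Suc 0) = 1" by (simp add: qfact_def qint_def)
lemma qfact2: "qfact q (Suc (Suc 0)) = 1 + q" by (simp add: qfact_def qint_def)


lemma cf0: "cf q x 0 = 1" by (simp add: cf_def qfact_def)
lemma cf21: "q \<noteq> 1 \<Longrightarrow> cf q 2 1 = 1 - inverse ((q::'a::field)^2)"
  by (simp add: cf_def qfact1 alpha31)
lemma cf31: "q \<noteq> 1 \<Longrightarrow> cf q 3 1 = (q + 1) * (1 - inverse (q::'a::field))"
  by (simp add: cf_def qfact1 alpha32 alpha32')
lemma cf32: "q \<noteq> 1 \<Longrightarrow> 1 + q \<noteq> 0 \<Longrightarrow> cf q 3 2 = (1 - inverse q) * (1 - inverse ((q::'a::field)^2))"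
  by (simp add: cf_def qfact2 alpha32 alpha31 numeral_2_eq_2 add.commute)

lemma cf21': "q \<noteq> 1 \<Longrightarrow> cf q 2 (Suc 0) = 1 - inverse ((q::'a::field)^2)"
  using cf21 by simp
lemma cf31': "q \<noteq> 1 \<Longrightarrow> cf q 3 (Suc 0) = (q + 1) * (1 - inverse (q::'a::field))"
  using cf31 by simp
lemma cf32': "q \<noteq> 1 \<Longrightarrow> 1 + q \<noteq> 0 \<Longrightarrow> cf q 3 (Suc (Suc 0)) = (1 - inverse q) * (1 - inverse ((q::'a::field)^2))"
  using cf32 by (simp add: numeral_2_eq_2)

definition NN :: "'a::field \<Rightarrow> 'a \<Rightarrow> nat \<times> nat \<Rightarrow> nat \<times> nat \<Rightarrow> 'a" where
  "NN q u y x = (if fst x \<le> snd y \<and> fst y + (snd y - fst x) = snd x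
      then cf q (snd x) (snd y - fst x) * u powi (int (fst x) - int (fst y))
           * q powi ((int (fst x) - 1) * (int (fst y) - 3)) else 0)"

definition S2 :: "(nat \<times> nat) set" where "S2 = {1..3} \<times> {1..3}"

lemma B3: "{1..3::nat} = {1,2,3}" by auto
lemma S2_eq: "S2 = {(1,1),(1,2),(1,3),(2,1),(2,2),(2,3),(3,1),(3,2),(3,3)}"
  unfolding S2_def B3 by auto

lemma S2_sum: "(\<Sum>z\<in>S2. f z) = f (1,1) + f (1,2) + f (1,3) + f (2,1) + f (2,2) + f (2,3) + f (3,1) + f (3,2) + f (3,3)"
  unfolding S2_eq by (simp add: add.assoc)

lemma S2_cases: "z \<in> S2 \<Longrightarrow> z = (1,1) \<or> z = (1,2) \<or> z = (1,3) \<or> z = (2,1) \<or> z = (2,2) \<or> z = (2,3) \<or> z = (3,1) \<or> z = (3,2) \<or> z = (3,3)"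
  unfolding S2_eq by simp

lemma N_cubic:
  fixes q u :: "'a::field"
  assumes q0: "q \<noteq> 0" and q1: "q \<noteq> 1" and q2: "1 + q \<noteq> 0" and u0: "u \<noteq> 0"
    and y: "y \<in> S2" and x: "x \<in> S2"
  shows "mmul S2 (mmul S2 (\<lambda>y x. NN q u y x - mid y x) (\<lambda>y x. NN q u y x + inverse (q^2) * mid y x))
           (\<lambda>y x. NN q u y x - inverse (q^3) * mid y x) y x = 0"
  using S2_cases[OF y] S2_cases[OF x]
  apply (simp only: mmul_def S2_sum)
  apply (elim disjE; hypsubst_thin)
  apply (simp_all add: NN_def mid_def cf0 cf21[OF q1] cf31[OF q1] cf32[OF q1 q2] cf21'[OF q1] cf31'[OF q1] cf32'[OF q1 q2] power_int_minus)
  apply (simp_all add: field_simps q0 u0)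
  apply algebra+
  done


definition agree :: "nat \<Rightarrow> nat \<Rightarrow> nat list \<Rightarrow> nat list \<Rightarrow> bool" where
  "agree k i y x \<longleftrightarrow> (\<forall>p<k. p \<noteq> i - 1 \<and> p \<noteq> i \<longrightarrow> y ! p = x ! p)"

definition pr :: "nat \<Rightarrow> nat list \<Rightarrow> nat \<times> nat" where
  "pr i y = (y ! (i - 1), y ! i)"

definition loc :: "nat \<Rightarrow> nat \<Rightarrow> (nat \<times> nat \<Rightarrow> nat \<times> nat \<Rightarrow> 'a::comm_ring_1) \<Rightarrow> nat list \<Rightarrow> nat list \<Rightarrow> 'a" where
  "loc k i F y x = (if agree k i y x then F (pr i y) (pr i x) else 0)"

lemma mmul_cong:
  assumes "\<And>a b. a \<in> S \<Longrightarrow> b \<in> S \<Longrightarrow> M a b = M' a b" "\<And>a b. a \<in> S \<Longrightarrow> b \<in> S \<Longrightarrow> N a b = N' a b"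
    "y \<in> S" "x \<in> S"
  shows "mmul S M N y x = mmul S M' N' y x"
  unfolding mmul_def using assms by (intro sum.cong) auto

lemma Words_pr:
  assumes "w \<in> Words 3 k" "1 \<le> i" "i < k"
  shows "pr i w \<in> Vbasis 3 \<times> Vbasis 3"
proof -
  have "w ! (i - 1) \<in> set w" "w ! i \<in> set w" using assms by (auto simp: Words_def)
  then show ?thesis using assms by (auto simp: Words_def pr_def)
qed

lemma mid_loc:
  assumes "y \<in> Words 3 k" "x \<in> Words 3 k" "1 \<le> i" "i < k"
  shows "mid y x = loc k i mid y x"
proof -
  have ly: "length y = k" and lx: "length x = k" using assms by (auto simp: Words_def)
  have "y = x \<longleftrightarrow> agree k i y x \<and> pr i y = pr i x"
  proof
    assume "agree k i y x \<and> pr i y = pr i x"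
    then have "\<forall>p<k. y ! p = x ! p" unfolding agree_def pr_def by (metis prod.inject)
    then show "y = x" using ly lx by (simp add: list_eq_iff_nth_eq)
  qed (simp add: agree_def)
  then show ?thesis unfolding loc_def mid_def by auto
qed

lemma Rcheck_i_loc:
  assumes "x \<in> Words 3 k"
  shows "Rcheck_i n q 3 r i y x = loc k i (Rcheck n q 3 r) y x"
  using assms unfolding Rcheck_i_def loc_def agree_def pr_def Words_def by auto

lemma loc_lin:
  "loc k i F y x + c * loc k i G y x = loc k i (\<lambda>a b. F a b + c * G a b) y x"
  "loc k i F y x - c * loc k i G y x = loc k i (\<lambda>a b. F a b - c * G a b) y x"
  unfolding loc_def by auto

lemma mmul_loc:
  assumes y: "y \<in> Words 3 k" and x: "x \<in> Words 3 k" and i1: "1 \<le> i" and ik: "i < k"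
  shows "mmul (Words 3 k) (loc k i F) (loc k i G) y x = loc k i (mmul (Vbasis 3 \<times> Vbasis 3) F G) y x"
proof (cases "agree k i y x")
  case False
  have "loc k i F y z * loc k i G z x = 0" for z
    using False unfolding loc_def agree_def by auto
  then show ?thesis using False unfolding mmul_def loc_def by simp
next
  case True
  let ?W = "Words 3 k"
  let ?A = "{z \<in> ?W. agree k i y z}"
  have fin: "finite ?W"
  proof -
    have "?W \<subseteq> {w. set w \<subseteq> {1..3} \<and> length w = k}" by (auto simp: Words_def Vbasis_def)
    moreover have "finite {w. set w \<subseteq> {1..3::nat} \<and> length w = k}"
      by (rule finite_lists_length_eq) simp
    ultimately show ?thesis by (rule finite_subset)
  qed
  have ag: "agree k i z x \<longleftrightarrow> agree k i y z" for z
    using True unfolding agree_def by auto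
  have "mmul ?W (loc k i F) (loc k i G) y x = (\<Sum>z\<in>?W. if agree k i y z then F (pr i y) (pr i z) * G (pr i z) (pr i x) else 0)"
    unfolding mmul_def loc_def ag by (intro sum.cong) auto
  also have "\<dots> = (\<Sum>z\<in>?A. F (pr i y) (pr i z) * G (pr i z) (pr i x))"
    using fin by (simp add: sum.inter_filter)
  also have "\<dots> = (\<Sum>ab\<in>Vbasis 3 \<times> Vbasis 3. F (pr i y) ab * G ab (pr i x))"
  proof (rule sum.reindex_bij_witness[where i = "\<lambda>ab. y[i - 1 := fst ab, i := snd ab]" and j = "pr i"])
    fix z assume z: "z \<in> ?A"
    have lz: "length z = k" and ly: "length y = k" using z y by (auto simp: Words_def)
    show "y[i - 1 := fst (pr i z), i := snd (pr i z)] = z"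
    proof (rule nth_equalityI)
      show "length (y[i - 1 := fst (pr i z), i := snd (pr i z)]) = length z" using lz ly by simp
      fix p assume "p < length (y[i - 1 := fst (pr i z), i := snd (pr i z)])"
      then have "p < k" using ly by simp
      then show "y[i - 1 := fst (pr i z), i := snd (pr i z)] ! p = z ! p"
        using z ly ik i1 unfolding agree_def pr_def by (auto simp: nth_list_update)
    qed
    show "pr i z \<in> Vbasis 3 \<times> Vbasis 3" using z Words_pr i1 ik by blast
  next
    fix ab assume ab: "ab \<in> Vbasis 3 \<times> Vbasis 3"
    have ly: "length y = k" using y by (auto simp: Words_def)
    show "pr i (y[i - 1 := fst ab, i := snd ab]) = ab"
      using ly ik i1 by (cases ab) (auto simp: pr_def nth_list_update)
    have sy: "set y \<subseteq> Vbasis 3" using y by (simp add: Words_def)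
    have fa: "fst ab \<in> Vbasis 3" "snd ab \<in> Vbasis 3" using ab by auto
    have s1: "set (y[i - 1 := fst ab]) \<subseteq> Vbasis 3"
      using set_update_subset_insert[of y "i - 1" "fst ab"] sy fa by blast
    have "set (y[i - 1 := fst ab, i := snd ab]) \<subseteq> Vbasis 3"
      using set_update_subset_insert[of "y[i - 1 := fst ab]" i "snd ab"] s1 fa by blast
    then show "y[i - 1 := fst ab, i := snd ab] \<in> ?A"
      using ly unfolding Words_def agree_def by (auto simp: nth_list_update)
  qed simp
  also have "\<dots> = loc k i (mmul (Vbasis 3 \<times> Vbasis 3) F G) y x"
    using True unfolding loc_def mmul_def by simp
  finally show ?thesis .
qed


lemma S2_V: "S2 = Vbasis 3 \<times> Vbasis 3" by (simp add: S2_def Vbasis_def)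

lemma exp_eq:
  fixes q :: "'a::field"
  assumes q0: "q \<noteq> 0"
  shows "q powi ((r + int x1 - 1) * (int y1 - (r + 3))) =
    q powi (- (r^2) - 2*r) * (q powi (-r)) powi (int x1 - int y1) * q powi ((int x1 - 1) * (int y1 - 3))"
proof -
  have "q powi (- (r^2) - 2*r) * (q powi (-r)) powi (int x1 - int y1) * q powi ((int x1 - 1) * (int y1 - 3))
      = q powi (- (r^2) - 2*r) * q powi (-r * (int x1 - int y1)) * q powi ((int x1 - 1) * (int y1 - 3))"
    by (simp only: power_int_mult)
  also have "\<dots> = q powi (- (r^2) - 2*r + -r * (int x1 - int y1) + (int x1 - 1) * (int y1 - 3))"
    by (simp only: power_int_add[OF disjI1[OF q0]])
  also have "- (r^2) - 2*r + -r * (int x1 - int y1) + (int x1 - 1) * (int y1 - 3) = (r + int x1 - 1) * (int y1 - (r + 3))"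
    by (simp add: algebra_simps power2_eq_square)
  finally show ?thesis by simp
qed

lemma Rcheck_NN:
  fixes q :: "'a::field_char_0"
  assumes pr: "primitive_root n q" and n3: "3 \<le> n" and a: "a \<in> S2" and b: "b \<in> S2"
  shows "Rcheck n q 3 r a b = q powi (- (r^2) - 2*r) * NN q (q powi (-r)) a b"
proof -
  have q0: "q \<noteq> 0" by (rule prim_nz[OF pr]) (use n3 in linarith)
  obtain y1 y2 where ay: "a = (y1, y2)" by (cases a)
  obtain x1 x2 where bx: "b = (x1, x2)" by (cases b)
  have m: "y1 \<in> Vbasis 3" "y2 \<in> Vbasis 3" "x1 \<in> Vbasis 3" "x2 \<in> Vbasis 3"
    using a b ay bx by (auto simp: S2_V)
  have "Rcheck n q 3 r a b = Rmat n q 3 r (y2, y1) (x1, x2)" by (simp add: Rcheck_def ay bx)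
  also have "\<dots> = (if x1 \<le> y2 \<and> y1 + (y2 - x1) = x2
     then (\<Prod>j<y2 - x1. alpha q 3 (x2 - 1 - j)) / qfact q (y2 - x1)
          * q powi ((r + int x1 - 1) * (int y1 - (r + int 3)))
     else 0)"
    by (rule Rmat_formula[OF pr n3 _ m(2) m(1) m(3) m(4)]) simp
  also have "\<dots> = q powi (- (r^2) - 2*r) * NN q (q powi (-r)) a b"
    unfolding NN_def ay bx fst_conv snd_conv cf_def of_nat_numeral exp_eq[OF q0] by (simp only: mult_ac mult_zero_right split: if_split) auto
  finally show ?thesis .
qed

lemma mmul_scale:
  "mmul S (\<lambda>a b. c * M a b) (\<lambda>a b. d * N a b) y x = c * d * mmul S M N y x"
  unfolding mmul_def by (simp add: sum_distrib_left ac_simps)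

theorem mainTheorem7:
  fixes q :: "'a::field_char_0" and n k i :: nat and r :: int
  assumes "alg_closed_field TYPE('a)"
    and "n \<ge> 5"
    and "primitive_root n q"
    and "k \<ge> 2"
    and "1 \<le> i" and "i \<le> k - 1"
  shows "\<forall>y\<in>Words 3 k. \<forall>x\<in>Words 3 k.
    mmul (Words 3 k)
      (mmul (Words 3 k)
        (\<lambda>y x. Rcheck_i n q 3 r i y x - q powi (- (r^2) - 2*r) * mid y x)
        (\<lambda>y x. Rcheck_i n q 3 r i y x + q powi (- (r^2) - 2*r - 2) * mid y x))
      (\<lambda>y x. Rcheck_i n q 3 r i y x - q powi (- (r^2) - 2*r - 3) * mid y x) y x = 0"
proof (intro ballI)
  fix y x assume y: "y \<in> Words 3 k" and x: "x \<in> Words 3 k"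
  have pr: "primitive_root n q" and n3: "3 \<le> n" using assms by auto
  have i1: "1 \<le> i" and ik: "i < k" using assms by auto
  have q0: "q \<noteq> 0" by (rule prim_nz[OF pr]) (use n3 in linarith)
  have pq: "\<And>m. 0 < m \<Longrightarrow> m < n \<Longrightarrow> q ^ m \<noteq> 1" using pr unfolding primitive_root_def by blast
  have q1: "q \<noteq> 1" using pq[of 1] assms(2) by simp
  have qq: "q^2 \<noteq> 1" using pq[of 2] assms(2) by simp
  have q2: "1 + q \<noteq> 0"
  proof
    assume "1 + q = 0" then have "q = -1" by (simp add: add_eq_0_iff)
    then show False using qq by simp
  qed
  define c where "c = q powi (- (r^2) - 2*r)"
  define u where "u = q powi (-r)"
  have u0: "u \<noteq> 0" using q0 by (simp add: u_def)
  have c2: "q powi (- (r^2) - 2*r - 2) = c * inverse (q^2)"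
    using q0 by (simp add: c_def power_int_diff power_int_minus divide_inverse)
  have c3: "q powi (- (r^2) - 2*r - 3) = c * inverse (q^3)"
    using q0 by (simp add: c_def power_int_diff power_int_minus divide_inverse)
  define An where "An = (\<lambda>a b. Rcheck n q 3 r a b - c * mid a b)"
  define Bn where "Bn = (\<lambda>a b. Rcheck n q 3 r a b + c * inverse (q^2) * mid a b)"
  define Cn where "Cn = (\<lambda>a b. Rcheck n q 3 r a b - c * inverse (q^3) * mid a b)"
  let ?W = "Words 3 k"
  let ?S = "Vbasis 3 \<times> Vbasis 3"
  have eA: "Rcheck_i n q 3 r i a b - q powi (- (r^2) - 2*r) * mid a b = loc k i An a b"
    if "a \<in> ?W" "b \<in> ?W" for a b
    unfolding An_def c_def Rcheck_i_loc[OF that(2)] mid_loc[OF that i1 ik] loc_lin ..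
  have eB: "Rcheck_i n q 3 r i a b + q powi (- (r^2) - 2*r - 2) * mid a b = loc k i Bn a b"
    if "a \<in> ?W" "b \<in> ?W" for a b
    unfolding Bn_def c2 Rcheck_i_loc[OF that(2)] mid_loc[OF that i1 ik] loc_lin ..
  have eC: "Rcheck_i n q 3 r i a b - q powi (- (r^2) - 2*r - 3) * mid a b = loc k i Cn a b"
    if "a \<in> ?W" "b \<in> ?W" for a b
    unfolding Cn_def c3 Rcheck_i_loc[OF that(2)] mid_loc[OF that i1 ik] loc_lin ..
  have inner: "mmul ?W (\<lambda>y x. Rcheck_i n q 3 r i y x - q powi (- (r^2) - 2*r) * mid y x)
        (\<lambda>y x. Rcheck_i n q 3 r i y x + q powi (- (r^2) - 2*r - 2) * mid y x) a b
      = loc k i (mmul ?S An Bn) a b" if "a \<in> ?W" "b \<in> ?W" for a b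
  proof -
    have "mmul ?W (\<lambda>y x. Rcheck_i n q 3 r i y x - q powi (- (r^2) - 2*r) * mid y x)
        (\<lambda>y x. Rcheck_i n q 3 r i y x + q powi (- (r^2) - 2*r - 2) * mid y x) a b
        = mmul ?W (loc k i An) (loc k i Bn) a b"
      by (rule mmul_cong[OF eA eB that])
    also have "\<dots> = loc k i (mmul ?S An Bn) a b" by (rule mmul_loc[OF that i1 ik])
    finally show ?thesis .
  qed
  have "mmul ?W (mmul ?W
        (\<lambda>y x. Rcheck_i n q 3 r i y x - q powi (- (r^2) - 2*r) * mid y x)
        (\<lambda>y x. Rcheck_i n q 3 r i y x + q powi (- (r^2) - 2*r - 2) * mid y x))
      (\<lambda>y x. Rcheck_i n q 3 r i y x - q powi (- (r^2) - 2*r - 3) * mid y x) y x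
     = mmul ?W (loc k i (mmul ?S An Bn)) (loc k i Cn) y x"
    by (rule mmul_cong[OF inner eC y x])
  also have "\<dots> = loc k i (mmul ?S (mmul ?S An Bn) Cn) y x" by (rule mmul_loc[OF y x i1 ik])
  also have "\<dots> = 0"
  proof -
    have py: "pr i y \<in> S2" and px: "pr i x \<in> S2" using Words_pr[OF y i1 ik] Words_pr[OF x i1 ik] by (auto simp: S2_V)
    have RA: "An a b = c * (NN q u a b - mid a b)" if "a \<in> S2" "b \<in> S2" for a b
      unfolding An_def Rcheck_NN[OF pr n3 that] c_def u_def by (simp add: algebra_simps)
    have RB: "Bn a b = c * (NN q u a b + inverse (q^2) * mid a b)" if "a \<in> S2" "b \<in> S2" for a b
      unfolding Bn_def Rcheck_NN[OF pr n3 that] c_def u_def by (simp add: algebra_simps)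
    have RC: "Cn a b = c * (NN q u a b - inverse (q^3) * mid a b)" if "a \<in> S2" "b \<in> S2" for a b
      unfolding Cn_def Rcheck_NN[OF pr n3 that] c_def u_def by (simp add: algebra_simps)
    have P1: "mmul S2 An Bn a b = c * c * mmul S2 (\<lambda>y x. NN q u y x - mid y x) (\<lambda>y x. NN q u y x + inverse (q^2) * mid y x) a b"
      if "a \<in> S2" "b \<in> S2" for a b
    proof -
      have "mmul S2 An Bn a b = mmul S2 (\<lambda>a b. c * (NN q u a b - mid a b)) (\<lambda>a b. c * (NN q u a b + inverse (q^2) * mid a b)) a b"
        by (rule mmul_cong[OF RA RB that])
      then show ?thesis by (simp only: mmul_scale)
    qed
    have "mmul S2 (mmul S2 An Bn) Cn (pr i y) (pr i x)
       = mmul S2 (\<lambda>a b. c * c * mmul S2 (\<lambda>y x. NN q u y x - mid y x) (\<lambda>y x. NN q u y x + inverse (q^2) * mid y x) a b)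
           (\<lambda>a b. c * (NN q u a b - inverse (q^3) * mid a b)) (pr i y) (pr i x)"
      by (rule mmul_cong[OF P1 RC py px])
    also have "\<dots> = c * c * c * mmul S2 (mmul S2 (\<lambda>y x. NN q u y x - mid y x) (\<lambda>y x. NN q u y x + inverse (q^2) * mid y x))
           (\<lambda>y x. NN q u y x - inverse (q^3) * mid y x) (pr i y) (pr i x)"
      by (simp only: mmul_scale)
    also have "\<dots> = 0" using N_cubic[OF q0 q1 q2 u0 py px] by simp
    finally show ?thesis unfolding loc_def S2_V by simp
  qed
  finally show "mmul ?W (mmul ?W
        (\<lambda>y x. Rcheck_i n q 3 r i y x - q powi (- (r^2) - 2*r) * mid y x)
        (\<lambda>y x. Rcheck_i n q 3 r i y x + q powi (- (r^2) - 2*r - 2) * mid y x))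
      (\<lambda>y x. Rcheck_i n q 3 r i y x - q powi (- (r^2) - 2*r - 3) * mid y x) y x = 0" .
qed

end
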